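(* Let $V$ be a finite set of variables and let $(\mathit{base}_0, \mathit{stay}_0, \mathit{step}_0, \mathit{conc}_0)$ and $(\mathit{base}_1, \mathit{stay}_1, \mathit{step}_1, \mathit{conc}_1)$ be generalized acceleration lemmas (GALs) over $V$. Define $\mathit{step} := \mathit{step}_0 \lor (\mathit{conc}_1 \land \lnot \mathit{base}_1 \land \mathit{step}_1 \land \mathit{stay}_0)$ and $\mathit{stay} := \mathit{stay}_0 \land \mathit{stay}_1 \land (\mathit{base}_1 \to \mathit{base}_1[V \mapsto V'])$. Then the tuple $(\mathit{base}_0, \mathit{stay}, \mathit{step}, \mathit{conc}_0)$ is also a GAL over $V$.
   Context: Fix a first-order theory $T$. For a set of variables $X$, $\mathcal{A}(X)$ denotes the set of assignments $\nu: X \to \mathcal{V}$ (values). $X' = \{x' \mid x \in X\}$ is a disjoint primed copy of $X$; for $\nu \in \mathcal{A}(X)$, $\nu' \in \mathcal{A}(X')$ is given by $\nu'(x') = \nu(x)$; for $\nu_1,\nu_2 \in \mathcal{A}(X)$, $\langle \nu_1,\nu_2\rangle := \nu_1 \uplus \nu_2'$. $\nu \models_T \alpha$ denotes entailment in $T$. For a formula $\alpha$, $\alpha[V\mapsto V']$ is the result of replacing each $v\in V$ simultaneously by $v'$. A generalized acceleration lemma (GAL) over $V$ is a tuple $(\mathit{base}, \mathit{stay}, \mathit{step}, \mathit{conc})$ of first-order formulas with $\mathit{base}, \mathit{conc}$ having free variables in $V$ and $\mathit{stay}, \mathit{step}$ having free variables in $V \cup V'$, such that: (I) for every sequence $\alpha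 \in \mathcal{A}(V)^\omega$ with $\alpha[0] \models_T \mathit{conc}$, if (a) for all $i$, $\langle\alpha[i],\alpha[i+1]\rangle \models_T \mathit{step} \lor \mathit{stay}$, and (b) for all $i$ there is $j \ge i$ with $\langle\alpha[j],\alpha[j+1]\rangle \models_T \mathit{step}$, then there is $k$ with $\alpha[k] \models_T \mathit{base}$; and (II) for all $\nu,\nu' \in \mathcal{A}(V)$ with $\nu \models_T \mathit{conc}$ and $\langle \nu,\nu'\rangle \models_T \mathit{step}\lor\mathit{stay}$, we have $\nu' \models_T \mathit{conc}$. *)

theory Defs
  imports Main
begin

text \<open>Variables form a finite type 'x (so V = UNIV), values a type 'v. A formula with free variables in V is
  represented by its satisfaction predicate on assignments (nu |=_T alpha); a formula with
  free variables in V and V' by a predicate on pairs (nu1, nu2), standing for <nu1,nu2>.\<close>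

type_synonym ('x, 'v) assignment = "'x \<Rightarrow> 'v"
type_synonym ('x, 'v) sform = "('x, 'v) assignment \<Rightarrow> bool"
type_synonym ('x, 'v) tform = "('x, 'v) assignment \<Rightarrow> ('x, 'v) assignment \<Rightarrow> bool"

definition is_GAL ::
  "('x::finite, 'v) sform \<Rightarrow> ('x, 'v) tform \<Rightarrow> ('x, 'v) tform \<Rightarrow> ('x, 'v) sform \<Rightarrow> bool"
where
  "is_GAL base stay step conc \<longleftrightarrow>
     (\<forall>\<alpha> :: nat \<Rightarrow> ('x, 'v) assignment.
        conc (\<alpha> 0) \<longrightarrow>
        (\<forall>i. step (\<alpha> i) (\<alpha> (Suc i)) \<or> stay (\<alpha> i) (\<alpha> (Suc i))) \<longrightarrow>
        (\<forall>i. \<exists>j\<ge>i. step (\<alpha> j) (\<alpha> (Suc j))) \<longrightarrow>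
        (\<exists>k. base (\<alpha> k)))
   \<and> (\<forall>\<nu> \<nu>'. conc \<nu> \<longrightarrow> (step \<nu> \<nu>' \<or> stay \<nu> \<nu>') \<longrightarrow> conc \<nu>')"

text \<open>alpha[V |-> V'] for a state formula: evaluate it on the primed (second) assignment.\<close>
definition prime_form :: "('x, 'v) sform \<Rightarrow> ('x, 'v) tform" where
  "prime_form \<phi> = (\<lambda>\<nu>1 \<nu>2. \<phi> \<nu>2)"

end

theory Submission
  imports Defs
begin

theorem lemma3:
  fixes base0 conc0 base1 conc1 :: "('x::finite, 'v) sform"
    and stay0 step0 stay1 step1 :: "('x, 'v) tform"
  assumes "is_GAL base0 stay0 step0 conc0"
    and "is_GAL base1 stay1 step1 conc1"
  shows "is_GAL base0
           (\<lambda>\<nu>1 \<nu>2. stay0 \<nu>1 \<nu>2 \<and> stay1 \<nu>1 \<nu>2 \<and> (base1 \<nu>1 \<longrightarrow> prime_form base1 \<nu>1 \<nu>2))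
           (\<lambda>\<nu>1 \<nu>2. step0 \<nu>1 \<nu>2 \<or> (conc1 \<nu>1 \<and> \<not> base1 \<nu>1 \<and> step1 \<nu>1 \<nu>2 \<and> stay0 \<nu>1 \<nu>2))
           conc0"
proof -
  from assms(1) have G0a: "\<And>\<alpha>. conc0 (\<alpha> 0) \<Longrightarrow>
        (\<forall>i. step0 (\<alpha> i) (\<alpha> (Suc i)) \<or> stay0 (\<alpha> i) (\<alpha> (Suc i))) \<Longrightarrow>
        (\<forall>i. \<exists>j\<ge>i. step0 (\<alpha> j) (\<alpha> (Suc j))) \<Longrightarrow> (\<exists>k. base0 (\<alpha> k))"
    and G0b: "\<And>\<nu> \<nu>'. conc0 \<nu> \<Longrightarrow> (step0 \<nu> \<nu>' \<or> stay0 \<nu> \<nu>') \<Longrightarrow> conc0 \<nu>'"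
    unfolding is_GAL_def by blast+
  from assms(2) have G1a: "\<And>\<alpha>. conc1 (\<alpha> 0) \<Longrightarrow>
        (\<forall>i. step1 (\<alpha> i) (\<alpha> (Suc i)) \<or> stay1 (\<alpha> i) (\<alpha> (Suc i))) \<Longrightarrow>
        (\<forall>i. \<exists>j\<ge>i. step1 (\<alpha> j) (\<alpha> (Suc j))) \<Longrightarrow> (\<exists>k. base1 (\<alpha> k))"
    unfolding is_GAL_def by blast
  show ?thesis
    unfolding is_GAL_def
  proof (intro conjI allI impI)
    fix \<nu> \<nu>' assume "conc0 \<nu>"
      "(step0 \<nu> \<nu>' \<or> conc1 \<nu> \<and> \<not> base1 \<nu> \<and> step1 \<nu> \<nu>' \<and> stay0 \<nu> \<nu>') \<or>
       stay0 \<nu> \<nu>' \<and> stay1 \<nu> \<nu>' \<and> (base1 \<nu> \<longrightarrow> prime_form base1 \<nu> \<nu>')"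
    then show "conc0 \<nu>'" using G0b by blast
  next
    fix \<alpha> :: "nat \<Rightarrow> 'x \<Rightarrow> 'v"
    assume c0: "conc0 (\<alpha> 0)"
      and h1: "\<forall>i. (step0 (\<alpha> i) (\<alpha> (Suc i)) \<or> conc1 (\<alpha> i) \<and> \<not> base1 (\<alpha> i) \<and> step1 (\<alpha> i) (\<alpha> (Suc i)) \<and> stay0 (\<alpha> i) (\<alpha> (Suc i))) \<or>
         stay0 (\<alpha> i) (\<alpha> (Suc i)) \<and> stay1 (\<alpha> i) (\<alpha> (Suc i)) \<and> (base1 (\<alpha> i) \<longrightarrow> prime_form base1 (\<alpha> i) (\<alpha> (Suc i)))"
      and h2: "\<forall>i. \<exists>j\<ge>i. step0 (\<alpha> j) (\<alpha> (Suc j)) \<or> conc1 (\<alpha> j) \<and> \<not> base1 (\<alpha> j) \<and> step1 (\<alpha> j) (\<alpha> (Suc j)) \<and> stay0 (\<alpha> j) (\<alpha> (Suc j))"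
    show "\<exists>k. base0 (\<alpha> k)"
    proof (rule ccontr)
      assume nb: "\<not> (\<exists>k. base0 (\<alpha> k))"
      have "\<exists>N. \<forall>j\<ge>N. \<not> step0 (\<alpha> j) (\<alpha> (Suc j))"
      proof (rule ccontr)
        assume "\<not> ?thesis"
        then have "\<forall>i. \<exists>j\<ge>i. step0 (\<alpha> j) (\<alpha> (Suc j))" by blast
        moreover have "\<forall>i. step0 (\<alpha> i) (\<alpha> (Suc i)) \<or> stay0 (\<alpha> i) (\<alpha> (Suc i))" using h1 by blast
        ultimately show False using G0a[of \<alpha>, OF c0] nb by blast
      qed
      then obtain N where N: "\<And>j. j \<ge> N \<Longrightarrow> \<not> step0 (\<alpha> j) (\<alpha> (Suc j))" by blast
      from h2 obtain j where j: "j \<ge> N" and "step0 (\<alpha> j) (\<alpha> (Suc j)) \<or> conc1 (\<alpha> j) \<and> \<not> base1 (\<alpha> j) \<and> step1 (\<alpha> j) (\<alpha> (Suc j)) \<and> stay0 (\<alpha> j) (\<alpha> (Suc j))"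
        by blast
      with N have cj: "conc1 (\<alpha> j)" by blast
      define \<beta> where "\<beta> i = \<alpha> (j + i)" for i
      have "\<exists>k. base1 (\<beta> k)"
      proof (rule G1a)
        show "conc1 (\<beta> 0)" using cj by (simp add: \<beta>_def)
        show "\<forall>i. step1 (\<beta> i) (\<beta> (Suc i)) \<or> stay1 (\<beta> i) (\<beta> (Suc i))"
        proof
          fix i
          have "\<not> step0 (\<alpha> (j+i)) (\<alpha> (Suc (j+i)))" using N j by simp
          then show "step1 (\<beta> i) (\<beta> (Suc i)) \<or> stay1 (\<beta> i) (\<beta> (Suc i))"
            using h1[rule_format, of "j+i"] by (auto simp add: \<beta>_def)
        qed
        show "\<forall>i. \<exists>j'\<ge>i. step1 (\<beta> j') (\<beta> (Suc j'))"
        proof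
          fix i
          obtain m where m: "m \<ge> j + i" and
            "step0 (\<alpha> m) (\<alpha> (Suc m)) \<or> conc1 (\<alpha> m) \<and> \<not> base1 (\<alpha> m) \<and> step1 (\<alpha> m) (\<alpha> (Suc m)) \<and> stay0 (\<alpha> m) (\<alpha> (Suc m))"
            using h2 by blast
          with N j have "step1 (\<alpha> m) (\<alpha> (Suc m))" by force
          then have "step1 (\<beta> (m - j)) (\<beta> (Suc (m - j)))" using m by (simp add: \<beta>_def Suc_diff_le)
          then show "\<exists>j'\<ge>i. step1 (\<beta> j') (\<beta> (Suc j'))" using m by (intro exI[of _ "m-j"]) auto
        qed
      qed
      then obtain k where k: "base1 (\<alpha> (j + k))" by (auto simp: \<beta>_def)
      have pers: "base1 (\<alpha> (j + k + m))" for m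
      proof (induction m)
        case 0 then show ?case using k by simp
      next
        case (Suc m)
        have "\<not> step0 (\<alpha> (j+k+m)) (\<alpha> (Suc (j+k+m)))" using N j by simp
        then show ?case using h1[rule_format, of "j+k+m"] Suc by (simp add: prime_form_def)
      qed
      obtain m where m: "m \<ge> j + k" and
        "step0 (\<alpha> m) (\<alpha> (Suc m)) \<or> conc1 (\<alpha> m) \<and> \<not> base1 (\<alpha> m) \<and> step1 (\<alpha> m) (\<alpha> (Suc m)) \<and> stay0 (\<alpha> m) (\<alpha> (Suc m))"
        using h2 by blast
      with N j have "\<not> base1 (\<alpha> m)" by force
      moreover have "base1 (\<alpha> m)" using pers[of "m - (j+k)"] m by simp
      ultimately show False by blast
    qed
  qed
qed

end
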